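(* For a prime $p$ let $M_p=\{(n,p^a,np^a): n\in\mathbb{N},\ a\in\mathbb{N}\}$. There is a positive existential formula $\varphi(x,y,w)$ in the language $\{0,1,+,R\}$ such that for every prime $p$ and all $x,y,w\in\mathbb{N}$, the structure $\mathfrak{N}_p=(\mathbb{N};0,1,+,\mid_p)$ (with $R$ interpreted as $\mid_p$) satisfies $\varphi(x,y,w)$ if and only if $(x,y,w)\in M_p$.
   Context: $\mathbb{N}$ contains $0$. For a prime $p$, $x\mid_p y$ means $y=\pm xp^s$ for some $s\in\mathbb{Z}$. *)

theory Defs
  imports Complex_Main "HOL-Computational_Algebra.Primes"
begin

datatype tm = Var nat | Zero | One | Plus tm tm

datatype pefm = TrueF | FalseF | Eq tm tm | Rel tm tm
  | Conj pefm pefm | Disj pefm pefm | Ex nat pefm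

fun tval :: "(nat \<Rightarrow> nat) \<Rightarrow> tm \<Rightarrow> nat" where
  "tval e (Var i) = e i"
| "tval e Zero = 0"
| "tval e One = 1"
| "tval e (Plus s t) = tval e s + tval e t"

fun tvars :: "tm \<Rightarrow> nat set" where
  "tvars (Var i) = {i}"
| "tvars Zero = {}"
| "tvars One = {}"
| "tvars (Plus s t) = tvars s \<union> tvars t"

fun fvars :: "pefm \<Rightarrow> nat set" where
  "fvars TrueF = {}"
| "fvars FalseF = {}"
| "fvars (Eq s t) = tvars s \<union> tvars t"
| "fvars (Rel s t) = tvars s \<union> tvars t"
| "fvars (Conj f g) = fvars f \<union> fvars g"
| "fvars (Disj f g) = fvars f \<union> fvars g"
| "fvars (Ex v f) = fvars f - {v}"

fun sat :: "(nat \<Rightarrow> nat \<Rightarrow> bool) \<Rightarrow> (nat \<Rightarrow> nat) \<Rightarrow> pefm \<Rightarrow> bool" where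
  "sat R e TrueF = True"
| "sat R e FalseF = False"
| "sat R e (Eq s t) = (tval e s = tval e t)"
| "sat R e (Rel s t) = R (tval e s) (tval e t)"
| "sat R e (Conj f g) = (sat R e f \<and> sat R e g)"
| "sat R e (Disj f g) = (sat R e f \<or> sat R e g)"
| "sat R e (Ex v f) = (\<exists>n. sat R (e(v := n)) f)"

definition divp :: "nat \<Rightarrow> nat \<Rightarrow> nat \<Rightarrow> bool" where
  "divp p x y \<longleftrightarrow> (\<exists>s::int. real y = real x * real p powi s \<or> real y = - (real x * real p powi s))"

definition Mp :: "nat \<Rightarrow> (nat \<times> nat \<times> nat) set" where
  "Mp p = {(n, p ^ a, n * p ^ a) | n a. True}"

end

theory Submission
  imports Defs
begin

lemma divp_nat:
  fixes p a b :: nat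
  assumes p: "prime p"
  shows "divp p a b \<longleftrightarrow> (\<exists>i j::nat. b * p^i = a * p^j)"
proof
  have p0: "real p > 0" using p prime_gt_0_nat by simp
  assume "divp p a b"
  then obtain s :: int where s: "real b = real a * real p powi s \<or> real b = - (real a * real p powi s)"
    unfolding divp_def by blast
  show "\<exists>i j::nat. b * p^i = a * p^j"
  proof (cases "real b = real a * real p powi s")
    case True
    show ?thesis
    proof (cases "s \<ge> 0")
      case True
      then have "real p powi s = real p ^ nat s"
        by (metis nat_0_le power_int_of_nat)
      with \<open>real b = _\<close> have "real (b * p^0) = real (a * p ^ nat s)" by simp
      then show ?thesis using of_nat_eq_iff by blast
    next
      case False
      then have "real p powi s = inverse (real p ^ nat (-s))"
        by (metis power_int_minus power_int_of_nat minus_minus nat_0_le neg_0_le_iff_le nle_le)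
      with \<open>real b = _\<close> have "real b * real p ^ nat (-s) = real a" using p0 by (simp add: field_simps)
      then have "real (b * p ^ nat (-s)) = real (a * p^0)" by simp
      then show ?thesis using of_nat_eq_iff by blast
    qed
  next
    case False
    then have b: "real b = - (real a * real p powi s)" using s by blast
    have "real p powi s > 0" using p0 by simp
    moreover have "real b \<ge> 0" by simp
    moreover have "real a * real p powi s \<ge> 0" using \<open>real p powi s > 0\<close> by simp
    ultimately have "real b = 0" using b by linarith
    then have "real a * real p powi s = 0" using b by simp
    then have "real a = 0" using \<open>real p powi s > 0\<close> p0 by auto
    note this \<open>real b = 0\<close>
    then show ?thesis by auto
  qed
next
  have p0: "real p > 0" using p prime_gt_0_nat by simp
  assume "\<exists>i j::nat. b * p^i = a * p^j"
  then obtain i j where ij: "b * p^i = a * p^j" by blast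
  then have "real b * real p ^ i = real a * real p ^ j"
    by (metis of_nat_mult of_nat_power)
  then have "real b = real a * real p powi (int j - int i)"
    using p0 by (simp add: power_int_diff field_simps)
  then show "divp p a b" unfolding divp_def by blast
qed

lemma cancel_pow:
  fixes a b p :: nat
  assumes "p > 0" "a * p^m = b * p^n" "m \<le> n"
  shows "a = b * p^(n-m)"
proof -
  have "a * p^m = (b * p^(n-m)) * p^m" using assms
    by (metis le_add_diff_inverse mult.assoc power_add mult.commute)
  then show ?thesis using assms(1) by simp
qed

lemma key:
  fixes p x J A k L :: nat
  assumes p: "prime p" and x: "x \<ge> 1"
    and eq: "(x * p^J + p^A) * p^k = (x+1) * p^L"
    and ge: "x * p^J \<ge> p^A"
  shows "J = A"
proof (rule ccontr)
  have p2: "p \<ge> 2" using p prime_ge_2_nat by blast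
  assume ne: "J \<noteq> A"
  show False
  proof (cases "J > A")
    case True
    define d where "d = J - A"
    have d: "d \<ge> 1" "J = A + d" using True d_def by auto
    have e: "(x * p^d + 1) * p^(A+k) = (x+1) * p^L"
      using eq by (simp add: d power_add algebra_simps)
    have big: "x * p^d + 1 > x + 1"
    proof -
      have "p^d \<ge> 2" using self_le_power[of p d] p2 d(1) by simp
        hence "x * p^d \<ge> x * 2" by (rule mult_le_mono2)
      then show ?thesis using x by simp
    qed
    show False
    proof (cases "L \<le> A + k")
      case True
      from cancel_pow[of p "x+1" L "x * p^d + 1" "A+k"] e True p2
      have "x + 1 = (x * p^d + 1) * p^(A+k-L)" by simp
      moreover have "(x * p^d + 1) * p^(A+k-L) \<ge> x * p^d + 1"
      proof -
        have "1 \<le> p^(A+k-L)" using p2 by simp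
        then have "(x * p^d + 1) * 1 \<le> (x * p^d + 1) * p^(A+k-L)" by (rule mult_le_mono2)
        then show ?thesis by simp
      qed
      ultimately show False using big by simp
    next
      case False
      from cancel_pow[of p "x * p^d + 1" "A+k" "x+1" L] e False p2
      have "x * p^d + 1 = (x+1) * p^(L-(A+k))" by simp
      moreover have "p dvd (x+1) * p^(L-(A+k))" using False by simp
      moreover have "p dvd x * p^d" using d by simp
      ultimately have "p dvd 1" by (metis dvd_add_right_iff)
      then show False using p by simp
    qed
  next
    case False
    then have JA: "J < A" using ne by simp
    define d where "d = A - J"
    have d: "d \<ge> 1" "A = J + d" using JA d_def by auto
    have e: "(x + p^d) * p^(J+k) = (x+1) * p^L"
      using eq by (simp add: d power_add algebra_simps)
    have pd: "p^d \<ge> 2" using self_le_power[of p d] p2 d(1) by simp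
    have xge: "x \<ge> p^d" using ge d(2) p2 by (simp add: power_add)
    show False
    proof (cases "L \<le> J + k")
      case True
      from cancel_pow[of p "x+1" L "x + p^d" "J+k"] e True p2
      have "x + 1 = (x + p^d) * p^(J+k-L)" by simp
      moreover have "(x + p^d) * p^(J+k-L) \<ge> x + p^d"
      proof -
        have "1 \<le> p^(J+k-L)" using p2 by simp
        then have "(x + p^d) * 1 \<le> (x + p^d) * p^(J+k-L)" by (rule mult_le_mono2)
        then show ?thesis by simp
      qed
      ultimately show False using pd by simp
    next
      case False
      from cancel_pow[of p "x + p^d" "J+k" "x+1" L] e False p2
      have h: "x + p^d = (x+1) * p^(L-(J+k))" by simp
      have "p^(L-(J+k)) \<ge> 2" using False p2 self_le_power[of p "L-(J+k)"] by simp
      then have "(x+1) * p^(L-(J+k)) \<ge> (x+1) * 2" by (rule mult_le_mono2)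
      then show False using h xge by simp
    qed
  qed
qed

definition phi :: pefm where
  "phi = Disj (Conj (Eq (Var 0) Zero) (Conj (Eq (Var 2) Zero) (Rel One (Var 1))))
     (Conj (Rel One (Var 1)) (Conj (Rel (Var 0) (Var 2))
       (Conj (Rel (Plus (Var 0) One) (Plus (Var 2) (Var 1)))
         (Ex 3 (Eq (Var 2) (Plus (Var 1) (Var 3)))))))"

lemma powp:
  fixes p y :: nat
  assumes p: "prime p" and "y * p^i = 1 * p^j"
  shows "\<exists>a. y = p^a"
proof (cases "i \<le> j")
  case True
  then show ?thesis using cancel_pow[of p y i 1 j] assms prime_gt_0_nat by auto
next
  case False
  then have "1 = y * p^(i-j)" using cancel_pow[of p 1 j y i] assms prime_gt_0_nat by auto
  then have "y * p^(i-j) = 1" by simp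
  then have "y = 1" by simp
  then show ?thesis by (metis power_0)
qed

theorem lemma4p7:
  shows "\<exists>\<phi>::pefm. fvars \<phi> \<subseteq> {0, 1, 2} \<and>
    (\<forall>p::nat. prime p \<longrightarrow> (\<forall>x y w :: nat. \<forall>e :: nat \<Rightarrow> nat.
       e 0 = x \<longrightarrow> e 1 = y \<longrightarrow> e 2 = w \<longrightarrow>
       (sat (divp p) e \<phi> \<longleftrightarrow> (x, y, w) \<in> Mp p)))"
proof (intro exI[of _ phi] conjI allI impI)
  show "fvars phi \<subseteq> {0, 1, 2}" by (auto simp: phi_def)
next
  fix p x y w :: nat and e :: "nat \<Rightarrow> nat"
  assume p: "prime p" and e: "e 0 = x" "e 1 = y" "e 2 = w"
  have p0: "p > 0" using p prime_gt_0_nat by simp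
  have S: "sat (divp p) e phi \<longleftrightarrow>
     (x = 0 \<and> w = 0 \<and> divp p 1 y) \<or>
     (divp p 1 y \<and> divp p x w \<and> divp p (x+1) (w+y) \<and> (\<exists>d. w = y + d))"
    using e(2) by (simp add: phi_def e)
  show "sat (divp p) e phi \<longleftrightarrow> (x, y, w) \<in> Mp p"
  proof
    assume "sat (divp p) e phi"
    then consider "x = 0" "w = 0" "divp p 1 y"
      | "divp p 1 y" "divp p x w" "divp p (x+1) (w+y)" "y \<le> w"
      unfolding S by auto
    then show "(x, y, w) \<in> Mp p"
    proof cases
      case 1
      then obtain a where "y = p^a" using powp[OF p] divp_nat[OF p] by blast
      then show ?thesis using 1 unfolding Mp_def by auto
    next
      case 2
      then obtain a where ya: "y = p^a" using powp[OF p] divp_nat[OF p] by blast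
      obtain i j where ij: "w * p^i = x * p^j" using 2 divp_nat[OF p] by blast
      obtain k l where kl: "(w+y) * p^k = (x+1) * p^l" using 2 divp_nat[OF p] by blast
      have y1: "y \<ge> 1" using ya p0 by simp
      have x1: "x \<ge> 1"
      proof (rule ccontr)
        assume "\<not> x \<ge> 1"
        then have "w * p^i = 0" using ij by simp
        then have "w = 0" using p0 by simp
        then show False using 2(4) y1 by simp
      qed
      have "(x * p^j + p^(a+i)) * p^k = (w * p^i + p^a * p^i) * p^k" using ij by (simp add: power_add)
      also have "\<dots> = ((w+y) * p^k) * p^i" using ya by (simp add: algebra_simps)
      also have "\<dots> = (x+1) * p^(l+i)" using kl by (simp add: power_add algebra_simps)
      finally have eq: "(x * p^j + p^(a+i)) * p^k = (x+1) * p^(l+i)" .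
      have ge: "x * p^j \<ge> p^(a+i)"
        using 2(4) ij ya by (metis mult_le_mono1 power_add mult.commute)
      have "j = a + i" using key[OF p x1 eq ge] .
      then have "w * p^i = (x * p^a) * p^i" using ij by (simp add: power_add algebra_simps)
      then have "w = x * p^a" using p0 by simp
      then show ?thesis using ya unfolding Mp_def by auto
    qed
  next
    assume "(x, y, w) \<in> Mp p"
    then obtain n a where n: "x = n" "y = p^a" "w = n * p^a" unfolding Mp_def by auto
    have d1: "divp p 1 y" using divp_nat[OF p] n by (metis mult_1 power_0 mult.commute)
    show "sat (divp p) e phi"
    proof (cases "n = 0")
      case True
      then show ?thesis unfolding S using n d1 by simp
    next
      case False
      have "divp p x w" using divp_nat[OF p] n by (metis power_0 mult_1_right)
      moreover have "divp p (x+1) (w+y)" using divp_nat[OF p] n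
        by (metis power_0 mult_1_right distrib_right mult_1)
      moreover have "w = y + (n - 1) * p^a" using n False
        by (simp add: algebra_simps)
      ultimately show ?thesis unfolding S using d1 by blast
    qed
  qed
qed

end
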